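(* Let $X$ be a finite simplicial complex, $d\ge 0$, and let $F^{\uparrow}:C_{d+1}(X)\to C_{d+1}(X)$ and $F^{\downarrow}:C_{d-1}(X)\to C_{d-1}(X)$ be smooth. Let $G_d(\theta)=B_d^\intercal F^{\downarrow}(B_d\theta)+B_{d+1}F^{\uparrow}(B_{d+1}^\intercal\theta)$ on $C_d(X)$. Then $G_d$ is exact if and only if the maps $P_{d+1}F^{\uparrow}P_{d+1}$ and $Q_{d-1}F^{\downarrow}Q_{d-1}$ are exact.
   Context: A finite simplicial complex $X$ on vertex set $\{1,\dots,n\}$ is a collection of nonempty subsets closed under taking nonempty subsets; $X_d$ is the set of simplices with $d+1$ vertices; a $d$-simplex with vertices $i_0<\dots<i_d$ is written $[i_0,\dots,i_d]$. $C_d(X)$ is the real vector space with basis $X_d$ and inner product making $X_d$ orthonormal ($C_{-1}(X)=0$). The boundary map is $\partial_d[i_0,\dots,i_d]=\sum_{k=0}^d(-1)^k[i_0,\dots,\widehat{i_k},\dots,i_d]$ with matrix $B_d$; $B_d^\intercal$ its transpose. $P_{d+1}$ is the orthogonal projection of $C_{d+1}(X)$ onto $\operatorname{im}(B_{d+1}^\intercal)$, and $Q_{d-1}$ is the orthogonal projection of $C_{d-1}(X)$ onto $\operatorname{im}(B_d)$. A vector field $F$ on a real inner product space $V$ is exact if $F=\nabla\phi$ for some smooth function $\phi:V\to\mathbb{R}$. *)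

theory Defs
  imports "HOL-Analysis.Analysis"
begin

text \<open>All chain spaces live inside the Euclidean space real^('v set), whose standard basis
  vectors are indexed by the finite subsets of vertices; C_d(X) is the coordinate subspace
  spanned by the d-simplices of X (so the standard inner product makes X_d orthonormal).\<close>

definition simplicial_complex :: "'v set set \<Rightarrow> bool" where
  "simplicial_complex X \<longleftrightarrow>
     (\<forall>s\<in>X. s \<noteq> {}) \<and> (\<forall>s\<in>X. \<forall>t. t \<subseteq> s \<and> t \<noteq> {} \<longrightarrow> t \<in> X)"

text \<open>X_d : simplices with d+1 vertices (d an integer; X_{-1} is empty).\<close>
definition simplices :: "'v set set \<Rightarrow> int \<Rightarrow> 'v set set" where
  "simplices X d = {s \<in> X. int (card s) = d + 1}"

definition chains :: "('v::finite) set set \<Rightarrow> int \<Rightarrow> (real ^ ('v set)) set" where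
  "chains X d = {c. \<forall>s. c $ s \<noteq> 0 \<longrightarrow> s \<in> simplices X d}"

text \<open>Incidence coefficient of the (d-1)-simplex t in the boundary of the d-simplex s:
  if s = [i_0,...,i_d] and t omits i_k then (-1)^k, where k = number of vertices of s below i_k.\<close>
definition incidence :: "('v::linorder) set set \<Rightarrow> int \<Rightarrow> 'v set \<Rightarrow> 'v set \<Rightarrow> real" where
  "incidence X d t s =
     (if s \<in> simplices X d \<and> t \<in> simplices X (d - 1) \<and> t \<subseteq> s \<and> card (s - t) = 1
      then (-1) ^ card {w \<in> s. w < the_elem (s - t)} else 0)"

definition bmat :: "('v::{finite,linorder}) set set \<Rightarrow> int \<Rightarrow> real ^ ('v set) ^ ('v set)" where
  "bmat X d = (\<chi> t s. incidence X d t s)"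

definition orth_proj :: "('a::real_inner) set \<Rightarrow> 'a \<Rightarrow> 'a" where
  "orth_proj W x = (THE y. y \<in> W \<and> (\<forall>w\<in>W. inner (x - y) w = 0))"

fun dd :: "('a::real_normed_vector) list \<Rightarrow> ('a \<Rightarrow> 'b::real_normed_vector) \<Rightarrow> 'a \<Rightarrow> 'b" where
  "dd [] f = f"
| "dd (v # vs) f = (\<lambda>x. vector_derivative (\<lambda>t. dd vs f (x + t *\<^sub>R v)) (at 0))"

definition smooth_on :: "('a::real_normed_vector) set \<Rightarrow> ('a \<Rightarrow> 'b::real_normed_vector) \<Rightarrow> bool" where
  "smooth_on V f \<longleftrightarrow>
     (\<forall>vs. set vs \<subseteq> V \<longrightarrow>
        continuous_on V (dd vs f) \<and>
        (\<forall>v\<in>V. \<forall>x\<in>V. (\<lambda>t. dd vs f (x + t *\<^sub>R v)) differentiable (at (0::real))))"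

definition exact_on :: "('a::real_inner) set \<Rightarrow> ('a \<Rightarrow> 'a) \<Rightarrow> bool" where
  "exact_on V F \<longleftrightarrow>
     (\<exists>\<phi> :: 'a \<Rightarrow> real. smooth_on V \<phi> \<and>
        (\<forall>x\<in>V. F x \<in> V \<and> (\<phi> has_derivative (\<lambda>h. inner (F x) h)) (at x within V)))"

end

theory Submission imports Defs begin
lemma orth_proj_unique:
  fixes W :: "('a::euclidean_space) set"
  assumes "subspace W" "y \<in> W" "\<forall>w\<in>W. inner (x - y) w = 0"
  shows "orth_proj W x = y"
proof -
  have uq: "y' = y" if "y' \<in> W" "\<forall>w\<in>W. inner (x - y') w = 0" for y'
  proof -
    have d: "y' - y \<in> W" using assms(1,2) that(1) by (simp add: subspace_diff)
    have "inner (y' - y) (y' - y) = inner (x - y) (y' - y) - inner (x - y') (y' - y)"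
      by (simp add: inner_diff_left)
    also have "\<dots> = 0" using d assms(3) that(2) by simp
    finally show ?thesis by simp
  qed
  show ?thesis unfolding orth_proj_def
    apply (rule the_equality)
    using assms apply blast
    using uq by blast
qed

lemma orth_proj_props:
  fixes W :: "('a::euclidean_space) set"
  assumes "subspace W"
  shows "orth_proj W x \<in> W \<and> (\<forall>w\<in>W. inner (x - orth_proj W x) w = 0)"
proof -
  obtain y z where y: "y \<in> span W" and z: "\<And>w. w \<in> span W \<Longrightarrow> orthogonal z w" and e: "y + z = x"
    using orthogonal_subspace_decomp_exists[of W x] by blast
  have yW: "y \<in> W" using y assms by (metis span_eq_iff)
  have "\<forall>w\<in>W. inner (x - y) w = 0" using z e by (auto simp: orthogonal_def span_base)
  with orth_proj_unique[OF assms yW] yW show ?thesis by simp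
qed

lemma orth_proj_linear:
  fixes W :: "('a::euclidean_space) set"
  assumes "subspace W"
  shows "linear (orth_proj W)"
proof
  fix x y :: 'a and c :: real
  let ?P = "orth_proj W"
  have p: "\<And>x. ?P x \<in> W" "\<And>x w. w \<in> W \<Longrightarrow> inner (x - ?P x) w = 0"
    using orth_proj_props[OF assms] by auto
  show "?P (x + y) = ?P x + ?P y"
  proof (rule orth_proj_unique[OF assms])
    show "?P x + ?P y \<in> W" using p(1) assms by (simp add: subspace_add)
    show "\<forall>w\<in>W. inner (x + y - (?P x + ?P y)) w = 0"
    proof
      fix w assume w: "w \<in> W"
      have "inner (x + y - (?P x + ?P y)) w = inner (x - ?P x) w + inner (y - ?P y) w"
        by (metis inner_add_left add_diff_add)
      also have "\<dots> = 0" using p(2)[OF w] by simp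
      finally show "inner (x + y - (?P x + ?P y)) w = 0" .
    qed
  qed
  show "?P (c *\<^sub>R x) = c *\<^sub>R ?P x"
  proof (rule orth_proj_unique[OF assms])
    show "c *\<^sub>R ?P x \<in> W" using p(1) assms by (simp add: subspace_scale)
    show "\<forall>w\<in>W. inner (c *\<^sub>R x - c *\<^sub>R ?P x) w = 0"
    proof
      fix w assume w: "w \<in> W"
      have "inner (c *\<^sub>R x - c *\<^sub>R ?P x) w = c * inner (x - ?P x) w"
        by (metis inner_scaleR_left scaleR_right_diff_distrib)
      also have "\<dots> = 0" using p(2)[OF w] by simp
      finally show "inner (c *\<^sub>R x - c *\<^sub>R ?P x) w = 0" .
    qed
  qed
qed

lemma orth_proj_sym:
  fixes W :: "('a::euclidean_space) set"
  assumes "subspace W"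
  shows "inner (orth_proj W x) h = inner x (orth_proj W h)"
proof -
  let ?P = "orth_proj W"
  have p: "\<And>x. ?P x \<in> W" "\<And>x w. w \<in> W \<Longrightarrow> inner (x - ?P x) w = 0"
    using orth_proj_props[OF assms] by auto
  have "inner (h - ?P h) (?P x) = 0" using p by blast
  then have "inner (?P x) (h - ?P h) = 0" by (metis inner_commute)
  then have "inner (?P x) h = inner (?P x) (?P h)"
    by (simp add: inner_diff_right)
  also have "inner (x - ?P x) (?P h) = 0" using p by blast
  then have "inner (?P x) (?P h) = inner x (?P h)"
    by (simp add: inner_diff_left)
  finally show ?thesis .
qed

lemma orth_proj_id:
  fixes W :: "('a::euclidean_space) set"
  assumes "subspace W" "x \<in> W"
  shows "orth_proj W x = x"
  using orth_proj_unique[OF assms(1,2)] by simp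


lemma mat_inner: "inner (transpose A *v x) y = inner x (A *v (y::real^'n))"
  by (simp add: dot_lmul_matrix)

lemma subspace_range_mat: "subspace (range (\<lambda>x. (A::real^'n^'m) *v x))"
  by (simp add: subspace_UNIV linear_subspace_image matrix_vector_mul_linear)

lemma range_mat_eq:
  fixes A :: "real^'n^'m"
  shows "range (\<lambda>x. A *v x) = (\<lambda>x. A *v x) ` range (\<lambda>y. transpose A *v y)"
proof
  let ?U = "range (\<lambda>y. transpose A *v y)"
  have sU: "subspace ?U" by (rule subspace_range_mat)
  show "range (\<lambda>x. A *v x) \<subseteq> (\<lambda>x. A *v x) ` ?U"
  proof
    fix z assume "z \<in> range (\<lambda>x. A *v x)"
    then obtain x where z: "z = A *v x" by auto
    define u where "u = orth_proj ?U x"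
    have uU: "u \<in> ?U" and orth: "\<forall>w\<in>?U. inner (x - u) w = 0"
      using orth_proj_props[OF sU, of x] unfolding u_def by auto
    have "inner (A *v (x - u)) (A *v (x - u)) = inner (x - u) (transpose A *v (A *v (x - u)))"
      by (metis inner_commute mat_inner)
    also have "\<dots> = 0" using orth by auto
    finally have "A *v (x - u) = 0" by simp
    then have "A *v x = A *v u" by (simp add: matrix_vector_mult_diff_distrib)
    then show "z \<in> (\<lambda>x. A *v x) ` ?U" using uU z by auto
  qed
qed auto

lemma inj_on_mat:
  fixes A :: "real^'n^'m"
  shows "inj_on (\<lambda>x. A *v x) (range (\<lambda>y. transpose A *v y))"
proof (rule inj_onI)
  fix u1 u2 assume "u1 \<in> range (\<lambda>y. transpose A *v y)" "u2 \<in> range (\<lambda>y. transpose A *v y)"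
    and e: "A *v u1 = A *v u2"
  then obtain y1 y2 where y: "u1 = transpose A *v y1" "u2 = transpose A *v y2" by auto
  have "u1 - u2 = transpose A *v (y1 - y2)" using y by (simp add: matrix_vector_mult_diff_distrib)
  then have "inner (u1 - u2) (u1 - u2) = inner (transpose A *v (y1 - y2)) (u1 - u2)"
    by metis
  also have "\<dots> = inner (y1 - y2) (A *v (u1 - u2))" by (rule mat_inner)
  also have "\<dots> = 0" using e by (simp add: matrix_vector_mult_diff_distrib)
  finally show "u1 = u2" by simp
qed

lemma exists_M:
  fixes A :: "real^'n^'m"
  shows "\<exists>M. linear M \<and> (\<forall>x. A *v M x = orth_proj (range (\<lambda>x. A *v x)) x)
           \<and> (\<forall>x. M x \<in> range (\<lambda>y. transpose A *v y))"
proof -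
  let ?U = "range (\<lambda>y. transpose A *v y)"
  have sU: "subspace ?U" by (rule subspace_range_mat)
  have spU: "span ?U = ?U" using sU by (metis span_eq_iff)
  have inj: "inj_on (\<lambda>x. A *v x) (span ?U)" unfolding spU by (rule inj_on_mat)
  obtain g where g: "range g \<subseteq> ?U" "linear g" "\<forall>x\<in>?U. g (A *v x) = x"
    using real_vector.linear_inj_on_left_inverse[OF matrix_vector_mul_linear[of A] inj]
    unfolding spU by blast
  let ?R = "range (\<lambda>x. A *v x)"
  have sR: "subspace ?R" by (rule subspace_range_mat)
  define M where "M = (\<lambda>x. g (orth_proj ?R x))"
  have "linear M" unfolding M_def
    using linear_compose[OF orth_proj_linear[OF sR] g(2)] by (simp add: o_def)
  moreover have "A *v M x = orth_proj ?R x" for x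
  proof -
    have "orth_proj ?R x \<in> ?R" using orth_proj_props[OF sR] by blast
    then obtain u where u: "u \<in> ?U" "orth_proj ?R x = A *v u"
      using range_mat_eq[of A] by auto
    have gu: "g (A *v u) = u" using g(3) u(1) by blast
    show ?thesis unfolding M_def u(2) gu by (rule refl)
  qed
  moreover have "M x \<in> ?U" for x unfolding M_def using g(1) by blast
  ultimately show ?thesis by blast
qed

lemma dd_comp:
  assumes "subspace W" "linear L" "set vs \<subseteq> W" "x \<in> W"
  shows "dd vs (\<lambda>x. f (L x)) x = dd (map L vs) f (L x)"
  using assms(3,4)
proof (induction vs arbitrary: x)
  case Nil then show ?case by simp
next
  case (Cons v vs)
  have "(\<lambda>t. dd vs (\<lambda>x. f (L x)) (x + t *\<^sub>R v)) = (\<lambda>t. dd (map L vs) f (L x + t *\<^sub>R L v))"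
  proof
    fix t :: real
    have "x + t *\<^sub>R v \<in> W" using Cons.prems assms(1) by (simp add: subspace_add subspace_scale)
    then show "dd vs (\<lambda>x. f (L x)) (x + t *\<^sub>R v) = dd (map L vs) f (L x + t *\<^sub>R L v)"
      using Cons assms(2) by (simp add: linear_add linear_scale)
  qed
  then show ?case by simp
qed

lemma smooth_comp:
  fixes L :: "'a::euclidean_space \<Rightarrow> 'b::euclidean_space"
  assumes "subspace W" "linear L" "L ` W \<subseteq> V" "smooth_on V f"
  shows "smooth_on W (\<lambda>x. f (L x))"
  unfolding smooth_on_def
proof (intro allI impI conjI ballI)
  fix vs assume vs: "set vs \<subseteq> W"
  have vs': "set (map L vs) \<subseteq> V" using vs assms(3) by auto
  have sm: "continuous_on V (dd (map L vs) f)"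
    "\<forall>v\<in>V. \<forall>x\<in>V. (\<lambda>t. dd (map L vs) f (x + t *\<^sub>R v)) differentiable (at (0::real))"
    using assms(4) vs' unfolding smooth_on_def by auto
  have cL: "continuous_on W L"
    using assms(2) by (simp add: linear_continuous_on linear_conv_bounded_linear)
  have "continuous_on W (\<lambda>x. dd (map L vs) f (L x))"
    by (rule continuous_on_compose2[OF sm(1) cL assms(3)])
  then show "continuous_on W (dd vs (\<lambda>x. f (L x)))"
    by (rule continuous_on_cong[THEN iffD1, rotated 2]) (auto simp: dd_comp[OF assms(1,2) vs])
  fix v x assume v: "v \<in> W" and x: "x \<in> W"
  have "(\<lambda>t. dd vs (\<lambda>x. f (L x)) (x + t *\<^sub>R v)) = (\<lambda>t. dd (map L vs) f (L x + t *\<^sub>R L v))"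
  proof
    fix t :: real
    have "x + t *\<^sub>R v \<in> W" using v x assms(1) by (simp add: subspace_add subspace_scale)
    then have "dd vs (\<lambda>x. f (L x)) (x + t *\<^sub>R v) = dd (map L vs) f (L (x + t *\<^sub>R v))"
      by (rule dd_comp[OF assms(1,2) vs])
    moreover have "L (x + t *\<^sub>R v) = L x + t *\<^sub>R L v"
      using assms(2) by (simp add: linear_add linear_scale)
    ultimately show "dd vs (\<lambda>x. f (L x)) (x + t *\<^sub>R v) = dd (map L vs) f (L x + t *\<^sub>R L v)"
      by simp
  qed
  moreover have "L x \<in> V" "L v \<in> V" using v x assms(3) by auto
  ultimately show "(\<lambda>t. dd vs (\<lambda>x. f (L x)) (x + t *\<^sub>R v)) differentiable (at 0)"
    using sm(2) by simp
qed

lemma dd_add: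
  assumes "subspace W" "smooth_on W f" "smooth_on W g" "set vs \<subseteq> W" "x \<in> W"
  shows "dd vs (\<lambda>x. f x + g x) x = dd vs f x + dd vs g x"
  using assms(4,5)
proof (induction vs arbitrary: x)
  case Nil then show ?case by simp
next
  case (Cons v vs)
  have vW: "v \<in> W" and vsW: "set vs \<subseteq> W" using Cons.prems by auto
  have "(\<lambda>t. dd vs (\<lambda>x. f x + g x) (x + t *\<^sub>R v)) = (\<lambda>t. dd vs f (x + t *\<^sub>R v) + dd vs g (x + t *\<^sub>R v))"
  proof
    fix t :: real
    have "x + t *\<^sub>R v \<in> W" using Cons.prems assms(1) by (simp add: subspace_add subspace_scale)
    then show "dd vs (\<lambda>x. f x + g x) (x + t *\<^sub>R v) = dd vs f (x + t *\<^sub>R v) + dd vs g (x + t *\<^sub>R v)"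
      using Cons.IH vsW by simp
  qed
  moreover have "(\<lambda>t. dd vs f (x + t *\<^sub>R v)) differentiable (at 0)"
    "(\<lambda>t. dd vs g (x + t *\<^sub>R v)) differentiable (at 0)"
    using assms(2,3) vsW vW Cons.prems unfolding smooth_on_def by auto
  ultimately show ?case by simp
qed

lemma smooth_add:
  assumes "subspace W" "smooth_on W f" "smooth_on W g"
  shows "smooth_on W (\<lambda>x. f x + g x)"
  unfolding smooth_on_def
proof (intro allI impI conjI ballI)
  fix vs assume vs: "set vs \<subseteq> W"
  have e: "\<And>x. x \<in> W \<Longrightarrow> dd vs (\<lambda>x. f x + g x) x = dd vs f x + dd vs g x"
    using dd_add[OF assms vs] by blast
  have c: "continuous_on W (dd vs f)" "continuous_on W (dd vs g)"
    using assms(2,3) vs unfolding smooth_on_def by auto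
  have "continuous_on W (\<lambda>x. dd vs f x + dd vs g x)" using continuous_on_add[OF c] .
  then show "continuous_on W (dd vs (\<lambda>x. f x + g x))"
    by (rule continuous_on_cong[THEN iffD1, rotated 2]) (auto simp: e)
  fix v x assume v: "v \<in> W" and x: "x \<in> W"
  have "(\<lambda>t. dd vs (\<lambda>x. f x + g x) (x + t *\<^sub>R v)) = (\<lambda>t. dd vs f (x + t *\<^sub>R v) + dd vs g (x + t *\<^sub>R v))"
  proof
    fix t :: real
    have "x + t *\<^sub>R v \<in> W" using v x assms(1) by (simp add: subspace_add subspace_scale)
    then show "dd vs (\<lambda>x. f x + g x) (x + t *\<^sub>R v) = dd vs f (x + t *\<^sub>R v) + dd vs g (x + t *\<^sub>R v)"
      using e by simp
  qed
  moreover have "(\<lambda>t. dd vs f (x + t *\<^sub>R v)) differentiable (at 0)"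
    "(\<lambda>t. dd vs g (x + t *\<^sub>R v)) differentiable (at 0)"
    using assms(2,3) vs v x unfolding smooth_on_def by auto
  ultimately show "(\<lambda>t. dd vs (\<lambda>x. f x + g x) (x + t *\<^sub>R v)) differentiable (at 0)"
    by (simp add: differentiable_add)
qed

lemma subspace_chains: "subspace (chains X d)"
  unfolding subspace_def chains_def by (auto; metis add.right_neutral)

lemma bmat_range: "bmat X d *v x \<in> chains X (d - 1)"
  by (auto simp: chains_def matrix_vector_mult_def bmat_def incidence_def intro!: sum.neutral)

lemma bmatT_range: "transpose (bmat X d) *v x \<in> chains X d"
  unfolding transpose_matrix_vector
  by (auto simp: chains_def vector_matrix_mult_def bmat_def incidence_def intro!: sum.neutral)

lemma incidence_nz:
  assumes "incidence X d t s \<noteq> 0"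
  shows "s \<in> simplices X d \<and> t \<in> simplices X (d - 1) \<and> t \<subseteq> s \<and> card (s - t) = 1"
  using assms by (auto simp: incidence_def split: if_splits)

lemma incidence_val:
  assumes "s \<in> simplices X d" "t \<in> simplices X (d - 1)" "t \<subseteq> s" "s - t = {x}"
  shows "incidence X d t s = (-1) ^ card {w \<in> s. w < x}"
  using assms unfolding incidence_def by simp

lemma bd_sum:
  fixes X :: "('v::{finite,linorder}) set set"
  assumes sc: "simplicial_complex X" and d: "d \<ge> 0"
  shows "(\<Sum>t\<in>UNIV. incidence X d r t * incidence X (d + 1) t s) = 0"
proof (cases "\<exists>t. incidence X d r t * incidence X (d + 1) t s \<noteq> 0")
  case False then show ?thesis by (auto intro: sum.neutral)
next
  case True
  then obtain t0 where "incidence X d r t0 \<noteq> 0" "incidence X (d + 1) t0 s \<noteq> 0" by auto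
  from incidence_nz[OF this(1)] incidence_nz[OF this(2)]
  have t0: "t0 \<in> simplices X d" "r \<in> simplices X (d - 1)" "r \<subseteq> t0" "card (t0 - r) = 1"
    "s \<in> simplices X (d + 1)" "t0 \<subseteq> s" "card (s - t0) = 1" by auto
  have "s - r = (s - t0) \<union> (t0 - r)" using t0 by auto
  moreover have "(s - t0) \<inter> (t0 - r) = {}" by auto
  ultimately have "card (s - r) = 2" using t0 by (simp add: card_Un_disjoint)
  then obtain a0 b0 where ab0: "s - r = {a0, b0}" "a0 \<noteq> b0" by (auto simp: card_2_iff)
  obtain a b where ab: "s - r = {a, b}" "a < b"
  proof (cases "a0 < b0")
    case True then show ?thesis using that ab0 by blast
  next
    case False then have "b0 < a0" using ab0(2) by auto
    then show ?thesis using that[of b0 a0] ab0 by (simp add: insert_commute)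
  qed
  have as: "a \<in> s" "b \<in> s" "a \<notin> r" "b \<notin> r" using ab(1) by auto
  have sX: "s \<in> X" and cs: "int (card s) = d + 2" and rX: "r \<in> X" and cr: "int (card r) = d"
    using t0(5,2) by (auto simp: simplices_def)
  have cs1: "card s \<ge> 1" using cs d by linarith
  let ?f = "\<lambda>t. incidence X d r t * incidence X (d + 1) t s"
  have zero: "?f t = 0" if "t \<notin> {s - {a}, s - {b}}" for t
  proof (rule ccontr)
    assume "?f t \<noteq> 0"
    then have "incidence X d r t \<noteq> 0" "incidence X (d + 1) t s \<noteq> 0" by auto
    from incidence_nz[OF this(1)] incidence_nz[OF this(2)]
    have h: "r \<subseteq> t" "t \<subseteq> s" "card (s - t) = 1" by auto
    then obtain x where x: "s - t = {x}" by (auto simp: card_1_singleton_iff)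
    then have "t = s - {x}" using h by auto
    moreover have "x \<in> s - r" using x h by auto
    ultimately show False using that ab by auto
  qed
  have ne: "s - {a} \<noteq> s - {b}" using as ab by auto
  have "(\<Sum>t\<in>UNIV. ?f t) = (\<Sum>t\<in>{s - {a}, s - {b}}. ?f t)"
    by (rule sum.mono_neutral_right) (use zero in auto)
  also have "\<dots> = ?f (s - {a}) + ?f (s - {b})" using ne by simp
  also have "\<dots> = 0"
  proof -
    have sub: "s - {x} \<in> simplices X d" if "x \<in> s" "y \<in> s" "x \<noteq> y" for x y
    proof -
      have ss: "s - {x} \<subseteq> s \<and> s - {x} \<noteq> {}" using that by auto
      have cl: "\<forall>t. t \<subseteq> s \<and> t \<noteq> {} \<longrightarrow> t \<in> X"
        using sc sX unfolding simplicial_complex_def by blast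
      have "s - {x} \<in> X" using cl ss by blast
      moreover have "card (s - {x}) = card s - 1" using that(1) by simp
      moreover have "int (card s - 1) = d + 1" using cs cs1 by (simp add: of_nat_diff)
      ultimately show ?thesis by (simp add: simplices_def)
    qed
    have sa: "s - {a} \<in> simplices X d" using sub[of a b] as ab by auto
    have sb: "s - {b} \<in> simplices X d" using sub[of b a] as ab by auto
    have e1: "s - (s - {a}) = {a}" "s - (s - {b}) = {b}" using as by auto
    have e2: "s - {a} - r = {b}" "s - {b} - r = {a}" using ab as by auto
    have d1: "d + 1 - 1 = d" by simp
    have sa': "s - {a} \<in> simplices X (d + 1 - 1)" and sb': "s - {b} \<in> simplices X (d + 1 - 1)"
      using sa sb by simp_all
    have i1: "incidence X (d + 1) (s - {a}) s = (-1) ^ card {w \<in> s. w < a}"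
      by (rule incidence_val[OF t0(5) sa' _ e1(1)]) blast
    have i2: "incidence X (d + 1) (s - {b}) s = (-1) ^ card {w \<in> s. w < b}"
      by (rule incidence_val[OF t0(5) sb' _ e1(2)]) blast
    have i3: "incidence X d r (s - {a}) = (-1) ^ card {w \<in> s - {a}. w < b}"
      by (rule incidence_val[OF sa t0(2) _ e2(1)]) (use as t0(3,6) in blast)
    have i4: "incidence X d r (s - {b}) = (-1) ^ card {w \<in> s - {b}. w < a}"
      by (rule incidence_val[OF sb t0(2) _ e2(2)]) (use as t0(3,6) in blast)
    have c4: "{w \<in> s - {b}. w < a} = {w \<in> s. w < a}" using ab by auto
    have c3: "{w \<in> s - {a}. w < b} = {w \<in> s. w < b} - {a}" by auto
    have ain: "a \<in> {w \<in> s. w < b}" using as ab by auto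
    then have "card {w \<in> s. w < b} \<noteq> 0" by (auto simp: card_eq_0_iff)
    then obtain k where k: "card {w \<in> s. w < b} = Suc k" using not0_implies_Suc by blast
    have k2: "card {w \<in> s - {a}. w < b} = k" unfolding c3 using ain k by simp
    show ?thesis unfolding i1 i2 i3 i4 c4 k k2 by simp
  qed
  finally show ?thesis .
qed

lemma bmat_comp_zero:
  fixes X :: "('v::{finite,linorder}) set set"
  assumes "simplicial_complex X" "d \<ge> 0"
  shows "bmat X d ** bmat X (d + 1) = 0"
  using bd_sum[OF assms]
  by (simp add: matrix_matrix_mult_def bmat_def vec_eq_iff)

lemma lin_has_der: "linear L \<Longrightarrow> (L has_derivative L) (at x within S)"
  for L :: "'a::euclidean_space \<Rightarrow> 'b::euclidean_space"
  by (simp add: linear_conv_bounded_linear bounded_linear_imp_has_derivative)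

theorem mainTheorem6:
  fixes X :: "('v::{finite,linorder}) set set"
    and d :: int
    and Fup Fdown :: "real ^ ('v set) \<Rightarrow> real ^ ('v set)"
  assumes "simplicial_complex X"
    and "d \<ge> 0"
    and "\<forall>x\<in>chains X (d + 1). Fup x \<in> chains X (d + 1)"
    and "smooth_on (chains X (d + 1)) Fup"
    and "\<forall>x\<in>chains X (d - 1). Fdown x \<in> chains X (d - 1)"
    and "smooth_on (chains X (d - 1)) Fdown"
  shows "exact_on (chains X d)
           (\<lambda>\<theta>. transpose (bmat X d) *v Fdown (bmat X d *v \<theta>)
               + bmat X (d + 1) *v Fup (transpose (bmat X (d + 1)) *v \<theta>))
         \<longleftrightarrow>
         exact_on (chains X (d + 1))
           (\<lambda>x. orth_proj ((\<lambda>\<theta>. transpose (bmat X (d + 1)) *v \<theta>) ` chains X d)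
                  (Fup (orth_proj ((\<lambda>\<theta>. transpose (bmat X (d + 1)) *v \<theta>) ` chains X d) x)))
         \<and> exact_on (chains X (d - 1))
           (\<lambda>x. orth_proj ((\<lambda>\<theta>. bmat X d *v \<theta>) ` chains X d)
                  (Fdown (orth_proj ((\<lambda>\<theta>. bmat X d *v \<theta>) ` chains X d) x)))"
proof -
  let ?B = "bmat X d" and ?C = "bmat X (d + 1)"
  let ?V = "chains X d" and ?Vm = "chains X (d - 1)" and ?Vp = "chains X (d + 1)"
  have sV: "subspace ?V" and sVm: "subspace ?Vm" and sVp: "subspace ?Vp"
    by (rule subspace_chains)+
  have rB: "\<And>x. ?B *v x \<in> ?Vm" by (rule bmat_range)
  have rBT: "\<And>x. transpose ?B *v x \<in> ?V" by (rule bmatT_range)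
  have rC: "\<And>x. ?C *v x \<in> ?V" using bmat_range[of X "d + 1"] by simp
  have rCT: "\<And>x. transpose ?C *v x \<in> ?Vp" by (rule bmatT_range)
  have BC: "?B ** ?C = 0" by (rule bmat_comp_zero[OF assms(1,2)])
  have hWB: "(\<lambda>\<theta>. ?B *v \<theta>) ` ?V = range (\<lambda>x. ?B *v x)"
  proof
    show "range (\<lambda>x. ?B *v x) \<subseteq> (\<lambda>\<theta>. ?B *v \<theta>) ` ?V"
      using range_mat_eq[of ?B] rBT by auto
  qed auto
  have hWC: "(\<lambda>\<theta>. transpose ?C *v \<theta>) ` ?V = range (\<lambda>x. transpose ?C *v x)"
  proof
    show "range (\<lambda>x. transpose ?C *v x) \<subseteq> (\<lambda>\<theta>. transpose ?C *v \<theta>) ` ?V"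
      using range_mat_eq[of "transpose ?C"] rC by (auto simp: transpose_transpose)
  qed auto
  let ?WB = "range (\<lambda>x. ?B *v x)" and ?WC = "range (\<lambda>x. transpose ?C *v x)"
  have sWB: "subspace ?WB" and sWC: "subspace ?WC" by (rule subspace_range_mat)+
  let ?Q = "orth_proj ?WB" and ?P = "orth_proj ?WC"
  have Qin: "\<And>x. ?Q x \<in> ?WB" and Pin: "\<And>x. ?P x \<in> ?WC"
    using orth_proj_props[OF sWB] orth_proj_props[OF sWC] by auto
  have Qsym: "\<And>x h. inner (?Q x) h = inner x (?Q h)" by (rule orth_proj_sym[OF sWB])
  have Psym: "\<And>x h. inner (?P x) h = inner x (?P h)" by (rule orth_proj_sym[OF sWC])
  have linB: "linear (\<lambda>x. ?B *v x)" and linCT: "linear (\<lambda>x. transpose ?C *v x)"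
    by (rule matrix_vector_mul_linear)+
  have innC: "\<And>z y. inner (?C *v z) y = inner z (transpose ?C *v y)"
    using mat_inner[of "transpose ?C"] by (simp only: transpose_transpose)
  let ?G = "\<lambda>\<theta>. transpose ?B *v Fdown (?B *v \<theta>) + ?C *v Fup (transpose ?C *v \<theta>)"
  show ?thesis unfolding hWB hWC
  proof
    assume "exact_on ?V ?G"
    then obtain \<phi> where phi: "smooth_on ?V \<phi>"
      "\<And>x. x \<in> ?V \<Longrightarrow> (\<phi> has_derivative (\<lambda>h. inner (?G x) h)) (at x within ?V)"
      unfolding exact_on_def by blast
    have part1: "exact_on ?Vp (\<lambda>x. ?P (Fup (?P x)))"
    proof -
      obtain M where M: "linear M" "\<And>x. transpose ?C *v M x = ?P x"
        "\<And>x. M x \<in> range (\<lambda>y. transpose (transpose ?C) *v y)"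
        using exists_M[of "transpose ?C"] by blast
      have MC: "\<exists>y. M x = ?C *v y" for x using M(3)[of x] by (auto simp: transpose_transpose)
      have BM: "?B *v M x = 0" for x
      proof -
        obtain y where "M x = ?C *v y" using MC by blast
        then show ?thesis by (simp add: matrix_vector_mul_assoc BC)
      qed
      have MV: "M ` ?Vp \<subseteq> ?V" using MC rC by (metis image_subsetI)
      show ?thesis unfolding exact_on_def
      proof (intro exI conjI ballI)
        show "smooth_on ?Vp (\<lambda>x. \<phi> (M x))" by (rule smooth_comp[OF sVp M(1) MV phi(1)])
        fix x assume x: "x \<in> ?Vp"
        show "?P (Fup (?P x)) \<in> ?Vp" by (metis Pin rCT rangeE)
        have D: "((\<lambda>x. \<phi> (M x)) has_derivative (\<lambda>y. inner (?G (M x)) (M y))) (at x within ?Vp)"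
          by (rule has_derivative_in_compose2[OF phi(2) MV x lin_has_der[OF M(1)]])
        have "inner (?G (M x)) (M y) = inner (?P (Fup (?P x))) y" for y
        proof -
          have "inner (?G (M x)) (M y) = inner (transpose ?B *v Fdown 0) (M y)
                 + inner (?C *v Fup (?P x)) (M y)"
            by (simp only: BM M(2) inner_add_left)
          also have "\<dots> = inner (Fdown 0) (?B *v M y) + inner (Fup (?P x)) (?P y)"
            by (simp only: mat_inner innC M(2))
          also have "\<dots> = inner (?P (Fup (?P x))) y" using Psym[of "Fup (?P x)" y] by (simp add: BM)
          finally show ?thesis .
        qed
        then show "((\<lambda>x. \<phi> (M x)) has_derivative (\<lambda>h. inner (?P (Fup (?P x))) h)) (at x within ?Vp)"
          using D by simp
      qed
    qed
    have part2: "exact_on ?Vm (\<lambda>x. ?Q (Fdown (?Q x)))"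
    proof -
      obtain N where N: "linear N" "\<And>x. ?B *v N x = ?Q x"
        "\<And>x. N x \<in> range (\<lambda>y. transpose ?B *v y)"
        using exists_M[of ?B] by blast
      have CN: "transpose ?C *v N x = 0" for x
      proof -
        obtain y where "N x = transpose ?B *v y" using N(3) by blast
        moreover have t0: "transpose (0::real^('v set)^('v set)) = 0"
          by (simp add: transpose_def vec_eq_iff)
        ultimately show ?thesis
          by (simp only: matrix_vector_mul_assoc matrix_transpose_mul[symmetric] BC t0
              matrix_vector_mult_0)
      qed
      have NV: "N ` ?Vm \<subseteq> ?V" by (metis N(3) rBT rangeE image_subsetI)
      show ?thesis unfolding exact_on_def
      proof (intro exI conjI ballI)
        show "smooth_on ?Vm (\<lambda>x. \<phi> (N x))" by (rule smooth_comp[OF sVm N(1) NV phi(1)])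
        fix x assume x: "x \<in> ?Vm"
        show "?Q (Fdown (?Q x)) \<in> ?Vm" by (metis Qin rB rangeE)
        have D: "((\<lambda>x. \<phi> (N x)) has_derivative (\<lambda>y. inner (?G (N x)) (N y))) (at x within ?Vm)"
          by (rule has_derivative_in_compose2[OF phi(2) NV x lin_has_der[OF N(1)]])
        have "inner (?G (N x)) (N y) = inner (?Q (Fdown (?Q x))) y" for y
        proof -
          have "inner (?G (N x)) (N y) = inner (transpose ?B *v Fdown (?Q x)) (N y)
                 + inner (?C *v Fup 0) (N y)"
            by (simp only: CN N(2) inner_add_left)
          also have "\<dots> = inner (Fdown (?Q x)) (?Q y) + inner (Fup 0) (transpose ?C *v N y)"
            by (simp only: mat_inner innC N(2))
          also have "\<dots> = inner (?Q (Fdown (?Q x))) y" by (simp only: CN inner_zero_right add_0_right Qsym[of "Fdown (?Q x)" y])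
          finally show ?thesis .
        qed
        then show "((\<lambda>x. \<phi> (N x)) has_derivative (\<lambda>h. inner (?Q (Fdown (?Q x))) h)) (at x within ?Vm)"
          using D by simp
      qed
    qed
    show "exact_on ?Vp (\<lambda>x. ?P (Fup (?P x))) \<and> exact_on ?Vm (\<lambda>x. ?Q (Fdown (?Q x)))"
      using part1 part2 by blast
  next
    assume "exact_on ?Vp (\<lambda>x. ?P (Fup (?P x))) \<and> exact_on ?Vm (\<lambda>x. ?Q (Fdown (?Q x)))"
    then obtain \<psi>1 \<psi>2 where p2: "smooth_on ?Vp \<psi>2"
      "\<And>x. x \<in> ?Vp \<Longrightarrow> (\<psi>2 has_derivative (\<lambda>h. inner (?P (Fup (?P x))) h)) (at x within ?Vp)"
      and p1: "smooth_on ?Vm \<psi>1"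
      "\<And>x. x \<in> ?Vm \<Longrightarrow> (\<psi>1 has_derivative (\<lambda>h. inner (?Q (Fdown (?Q x))) h)) (at x within ?Vm)"
      unfolding exact_on_def by blast
    have BV: "(\<lambda>x. ?B *v x) ` ?V \<subseteq> ?Vm" using rB by blast
    have CV: "(\<lambda>x. transpose ?C *v x) ` ?V \<subseteq> ?Vp" using rCT by blast
    show "exact_on ?V ?G" unfolding exact_on_def
    proof (intro exI conjI ballI)
      show "smooth_on ?V (\<lambda>x. \<psi>1 (?B *v x) + \<psi>2 (transpose ?C *v x))"
        by (rule smooth_add[OF sV smooth_comp[OF sV linB BV p1(1)] smooth_comp[OF sV linCT CV p2(1)]])
      fix x assume x: "x \<in> ?V"
      show "?G x \<in> ?V" using rBT rC sV by (simp add: subspace_add)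
      have D1: "((\<lambda>x. \<psi>1 (?B *v x)) has_derivative
          (\<lambda>y. inner (?Q (Fdown (?Q (?B *v x)))) (?B *v y))) (at x within ?V)"
        by (rule has_derivative_in_compose2[OF p1(2) BV x lin_has_der[OF linB]])
      have D2: "((\<lambda>x. \<psi>2 (transpose ?C *v x)) has_derivative
          (\<lambda>y. inner (?P (Fup (?P (transpose ?C *v x)))) (transpose ?C *v y))) (at x within ?V)"
        by (rule has_derivative_in_compose2[OF p2(2) CV x lin_has_der[OF linCT]])
      have q1: "?Q (?B *v x) = ?B *v x" by (rule orth_proj_id[OF sWB]) auto
      have q2: "?P (transpose ?C *v x) = transpose ?C *v x" by (rule orth_proj_id[OF sWC]) auto
      have q3: "?Q (?B *v y) = ?B *v y" for y by (rule orth_proj_id[OF sWB]) auto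
      have q4: "?P (transpose ?C *v y) = transpose ?C *v y" for y by (rule orth_proj_id[OF sWC]) auto
      have "inner (?Q (Fdown (?Q (?B *v x)))) (?B *v y)
           + inner (?P (Fup (?P (transpose ?C *v x)))) (transpose ?C *v y) = inner (?G x) y" for y
        by (simp only: q1 q2 Qsym Psym q3 q4 inner_add_left mat_inner innC)
      then show "((\<lambda>x. \<psi>1 (?B *v x) + \<psi>2 (transpose ?C *v x)) has_derivative (\<lambda>h. inner (?G x) h)) (at x within ?V)"
        using has_derivative_add[OF D1 D2] by simp
    qed
  qed
qed

end
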